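(* Let $1<p<q\le\infty$ and define $F_{p,q}:\mathcal{S}(\mathbb{R})\setminus\{0\}\to\mathbb{R}_{>0}$ by \[F_{p,q}(f)=\frac{\|f\|_q\|\hat f\|_q}{\|f\|_p\|\hat f\|_p}.\] If there exist sequences $(f_n)_{n\ge1}$ and $(g_n)_{n\ge1}$ in $\mathcal{S}(\mathbb{R})\setminus\{0\}$ such that $\lim_{n\to\infty}F_{p,q}(f_n)=0$, $\lim_{n\to\infty}F_{p,q}(g_n)=\infty$, and $\lambda f_n+(1-\lambda)g_n\ne0$ for all $\lambda\in[0,1]$ and all $n\ge1$, then the image of $F_{p,q}$ is all of $\mathbb{R}_{>0}$.
   Context: $\mathcal{S}(\mathbb{R})$ is the space of Schwartz functions on $\mathbb{R}$; $\|\cdot\|_r$ is the $L^r(\mathbb{R})$ norm with respect to Lebesgue measure; the Fourier transform is $\hat f(\xi)=\int_{\mathbb{R}}f(x)e^{-2\pi i x\xi}\,dx$. *)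

theory Defs
  imports "HOL-Analysis.Analysis" "HOL-Probability.Essential_Supremum"
begin

fun nth_deriv :: "nat \<Rightarrow> (real \<Rightarrow> complex) \<Rightarrow> real \<Rightarrow> complex" where
  "nth_deriv 0 f = f"
| "nth_deriv (Suc k) f = (\<lambda>x. vector_derivative (nth_deriv k f) (at x))"

definition schwartz :: "(real \<Rightarrow> complex) \<Rightarrow> bool" where
  "schwartz f \<longleftrightarrow>
     (\<forall>k x. (nth_deriv k f has_vector_derivative nth_deriv (Suc k) f x) (at x)) \<and>
     (\<forall>m k. bounded (range (\<lambda>x. \<bar>x\<bar> ^ m * norm (nth_deriv k f x))))"

definition Lnorm :: "ereal \<Rightarrow> (real \<Rightarrow> complex) \<Rightarrow> real" where
  "Lnorm r f = (if r = \<infinity> then real_of_ereal (esssup lborel (\<lambda>x. ereal (norm (f x))))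
                else (integral\<^sup>L lborel (\<lambda>x. norm (f x) powr real_of_ereal r)) powr (1 / real_of_ereal r))"

definition fourier :: "(real \<Rightarrow> complex) \<Rightarrow> real \<Rightarrow> complex" where
  "fourier f \<xi> = integral\<^sup>L lborel (\<lambda>x. f x * cis (- 2 * pi * x * \<xi>))"

definition Fpq :: "real \<Rightarrow> ereal \<Rightarrow> (real \<Rightarrow> complex) \<Rightarrow> real" where
  "Fpq p q f = (Lnorm q f * Lnorm q (fourier f)) / (Lnorm (ereal p) f * Lnorm (ereal p) (fourier f))"

end

theory Submission
  imports Defs "HOL-Probability.Levy"
begin

definition dec :: "(real \<Rightarrow> complex) \<Rightarrow> bool" where
  "dec u \<longleftrightarrow> continuous_on UNIV u \<and> (\<exists>C. \<forall>x. norm (u x) \<le> C / (1 + x^2))"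

lemma int_w: "integrable lborel (\<lambda>x::real. C / (1 + x^2))"
proof -
  have "integrable lborel (\<lambda>x::real. inverse (1 + x^2))"
    using integrable_inverse_1_plus_square by (simp add: set_integrable_def einterval_def)
  then have "integrable lborel (\<lambda>x::real. C * inverse (1 + x^2))" by simp
  then show ?thesis by (simp add: divide_inverse)
qed

lemma dec_meas: "dec u \<Longrightarrow> u \<in> borel_measurable lborel"
  unfolding dec_def by (auto intro: borel_measurable_continuous_onI)

lemma dec_C': assumes "dec u" shows "\<exists>C\<ge>0. (\<forall>x. norm (u x) \<le> C / (1 + x^2)) \<and> (\<forall>x. norm (u x) \<le> C)"
proof -
  obtain C where C: "\<And>x. norm (u x) \<le> C / (1 + x^2)" using assms unfolding dec_def by auto
  have "norm (u 0) \<le> C" using C[of 0] by simp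
  then have C0: "C \<ge> 0" by (meson norm_ge_zero order_trans)
  moreover have "norm (u x) \<le> C" for x
  proof -
    have "C / (1 + x^2) \<le> C" using divide_left_mono[of 1 "1+x^2" C] C0 by (simp add: add_pos_nonneg)
    then show ?thesis using C[of x] by simp
  qed
  ultimately show ?thesis using C by blast
qed

lemma dec_integrable: assumes "dec u" shows "integrable lborel u"
proof -
  from dec_C'[OF assms] obtain C where C0: "C \<ge> 0" and C: "\<And>x. norm (u x) \<le> C / (1 + x^2)" by blast
  have b: "norm (u x) \<le> norm (C / (1 + x^2))" for x using C[of x] C0 by (simp add: abs_of_nonneg)
  show ?thesis
    by (rule Bochner_Integration.integrable_bound[OF int_w[of C] dec_meas[OF assms] AE_I2[OF b]])
qed

lemma dec_integrable_pow: assumes "dec u" "r \<ge> 1" shows "integrable lborel (\<lambda>x. norm (u x) powr r)"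
proof -
  from dec_C'[OF assms(1)] obtain C where C0: "C \<ge> 0" and C: "\<And>x. norm (u x) \<le> C / (1 + x^2)" and B: "\<And>x. norm (u x) \<le> C"
    by blast
  have m: "u \<in> borel_measurable lborel" using dec_meas[OF assms(1)] .
  have "norm (u x) powr r \<le> C powr (r - 1) * C / (1 + x^2)" for x
  proof (cases "u x = 0")
    case True then show ?thesis using C0 by simp
  next
    case False
    have "norm (u x) powr r = norm (u x) powr (r - 1) * norm (u x)"
      using False by (simp add: powr_diff)
    also have "\<dots> \<le> C powr (r - 1) * (C / (1 + x^2))"
      using B C assms(2) False by (intro mult_mono powr_mono2) auto
    finally show ?thesis by simp
  qed
  moreover have "C powr (r - 1) * C \<ge> 0" using C0 by simp
  ultimately have "norm (norm (u x) powr r) \<le> norm (C powr (r - 1) * C / (1 + x^2))" for x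
    by (simp add: abs_of_nonneg)
  note b = this
  have m2: "(\<lambda>x. norm (u x) powr r) \<in> borel_measurable lborel" using m by measurable
  show ?thesis
    by (rule Bochner_Integration.integrable_bound[OF int_w[of "C powr (r - 1) * C"] m2 AE_I2[OF b]])
qed

lemma pw_bound:
  fixes z :: complex
  assumes "0 \<le> D" "norm z \<le> D / (1 + x^2)" "r \<ge> 1"
  shows "norm z powr r \<le> D powr (r - 1) * D / (1 + x^2)"
proof (cases "z = 0")
  case True then show ?thesis using assms by simp
next
  case False
  have "D / (1 + x^2) \<le> D" using divide_left_mono[of 1 "1+x^2" D] assms(1) by (simp add: add_pos_nonneg)
  then have B: "norm z \<le> D" using assms(2) by linarith
  have "norm z powr r = norm z powr (r - 1) * norm z"
    using False by (simp add: powr_diff)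
  also have "\<dots> \<le> D powr (r - 1) * (D / (1 + x^2))"
    using B assms False by (intro mult_mono powr_mono2) auto
  finally show ?thesis by simp
qed

lemma cont_AE_zero:
  fixes u :: "real \<Rightarrow> complex"
  assumes "continuous_on UNIV u" "AE x in lborel. u x = 0" shows "u x0 = 0"
proof (rule ccontr)
  assume ne: "u x0 \<noteq> 0"
  then obtain e where e: "e > 0" "\<forall>y. dist y x0 < e \<longrightarrow> dist (u y) (u x0) < norm (u x0)"
    using assms(1) unfolding continuous_on_iff by (metis UNIV_I zero_less_norm_iff)
  have sub: "{x0-e<..<x0+e} \<subseteq> {x. u x \<noteq> 0}"
  proof
    fix y assume "y \<in> {x0-e<..<x0+e}"
    then have "dist y x0 < e" by (auto simp: dist_real_def)
    then have "dist (u y) (u x0) < norm (u x0)" using e by auto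
    then show "y \<in> {x. u x \<noteq> 0}" by auto
  qed
  from assms(2) obtain N where N: "{x \<in> space lborel. \<not> u x = 0} \<subseteq> N" "emeasure lborel N = 0" "N \<in> sets lborel"
    by (rule AE_E)
  have "emeasure lborel {x0-e<..<x0+e} \<le> emeasure lborel N"
    using sub N by (intro emeasure_mono) auto
  then have "ennreal (2 * e) \<le> 0" using N e by simp
  then show False using e by simp
qed

lemma Lnorm_fin: "Lnorm (ereal r) u = (\<integral>x. norm (u x) powr r \<partial>lborel) powr (1/r)"
  by (simp add: Lnorm_def)

lemma Lnorm_inf: "Lnorm \<infinity> u = real_of_ereal (esssup lborel (\<lambda>x. ereal (norm (u x))))"
  by (simp add: Lnorm_def)

lemma Lint_pos:
  assumes "dec u" "r \<ge> 1" "u x0 \<noteq> 0" shows "(\<integral>x. norm (u x) powr r \<partial>lborel) > 0"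
proof -
  have int: "integrable lborel (\<lambda>x. norm (u x) powr r)" using dec_integrable_pow assms by blast
  have ge: "(\<integral>x. norm (u x) powr r \<partial>lborel) \<ge> 0" by (intro integral_nonneg_AE) auto
  have "(\<integral>x. norm (u x) powr r \<partial>lborel) \<noteq> 0"
  proof
    assume "(\<integral>x. norm (u x) powr r \<partial>lborel) = 0"
    then have "AE x in lborel. norm (u x) powr r = 0"
      using integral_nonneg_eq_0_iff_AE[OF int] by auto
    then have "AE x in lborel. u x = 0" by (rule eventually_mono) simp
    then have "u x0 = 0" using cont_AE_zero assms(1) unfolding dec_def by blast
    then show False using assms by simp
  qed
  then show ?thesis using ge by linarith
qed

lemma Lnorm_fin_pos:
  assumes "dec u" "r \<ge> 1" "u x0 \<noteq> 0" shows "Lnorm (ereal r) u > 0"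
  using Lint_pos[OF assms] by (simp add: Lnorm_fin)

lemma ess_nonneg: fixes u :: "real \<Rightarrow> complex"
  shows "esssup lborel (\<lambda>x. ereal (norm (u x))) \<ge> 0"
proof (rule ccontr)
  let ?E = "esssup lborel (\<lambda>x. ereal (norm (u x)))"
  assume "\<not> 0 \<le> ?E" then have E: "?E < 0" by simp
  have z: "0 \<le> ereal (norm (u x))" for x by simp
  have "AE x in lborel. ereal (norm (u x)) \<le> ?E" by (rule esssup_AE)
  then have "AE x in (lborel::real measure). False" apply (rule eventually_mono) using E z order_trans not_le by metis
  then have "ae_filter (lborel::real measure) = bot" by (simp add: eventually_False)
  then have "emeasure (lborel::real measure) (space lborel) = 0" by (simp add: ae_filter_eq_bot_iff)
  then show False by simp
qed

lemma ess_le: fixes u :: "real \<Rightarrow> complex" shows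
  "(\<lambda>x. ereal (norm (u x))) \<in> borel_measurable lborel \<Longrightarrow> (\<And>x. norm (u x) \<le> B) \<Longrightarrow>
    esssup lborel (\<lambda>x. ereal (norm (u x))) \<le> ereal B"
  apply (rule esssup_I) apply assumption apply (rule AE_I2) by simp

lemma dec_ess_meas: assumes "dec u" shows "(\<lambda>x. ereal (norm (u x))) \<in> borel_measurable lborel"
proof -
  have [measurable]: "u \<in> borel_measurable lborel" using dec_meas[OF assms] .
  show ?thesis by measurable
qed

lemma Lnorm_inf_pos:
  assumes "dec u" "u x0 \<noteq> 0" shows "Lnorm \<infinity> u > 0"
proof -
  from dec_C'[OF assms(1)] obtain C where "\<And>x. norm (u x) \<le> C" by blast
  let ?E = "esssup lborel (\<lambda>x. ereal (norm (u x)))"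
  have m: "(\<lambda>x. ereal (norm (u x))) \<in> borel_measurable lborel" using dec_ess_meas[OF assms(1)] .
  have le: "?E \<le> ereal C" using ess_le[OF m] \<open>\<And>x. norm (u x) \<le> C\<close> by blast
  have ge: "?E \<ge> 0" using ess_nonneg .
  have "?E \<noteq> 0"
  proof
    assume E0: "?E = 0"
    have "AE x in lborel. ereal (norm (u x)) \<le> 0" using esssup_AE[of "\<lambda>x. ereal (norm (u x))" lborel] E0 by simp
    then have "AE x in lborel. u x = 0" by (rule eventually_mono) simp
    then have "u x0 = 0" using cont_AE_zero assms(1) unfolding dec_def by blast
    then show False using assms by simp
  qed
  then have "?E > 0" using ge by simp
  then show ?thesis using le by (cases ?E) (auto simp: Lnorm_inf)
qed

lemma Lnorm_pos:
  assumes "dec u" "u x0 \<noteq> 0" "q = \<infinity> \<or> (\<exists>r. q = ereal r \<and> r \<ge> 1)" shows "Lnorm q u > 0"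
  using assms Lnorm_inf_pos Lnorm_fin_pos by blast

definition seg :: "(real \<Rightarrow> complex) \<Rightarrow> (real \<Rightarrow> complex) \<Rightarrow> real \<Rightarrow> real \<Rightarrow> complex" where
  "seg a b l = (\<lambda>x. complex_of_real l * a x + complex_of_real (1 - l) * b x)"

lemma seg_bound:
  assumes "\<And>x. norm (a x) \<le> Ca / (1 + x^2)" "\<And>x. norm (b x) \<le> Cb / (1 + x^2)"
  shows "norm (seg a b l x) \<le> (\<bar>l\<bar> * Ca + \<bar>1 - l\<bar> * Cb) / (1 + x^2)"
proof -
  have "norm (seg a b l x) \<le> \<bar>l\<bar> * norm (a x) + \<bar>1 - l\<bar> * norm (b x)"
    unfolding seg_def by (metis norm_mult norm_of_real norm_triangle_ineq)
  also have "\<dots> \<le> \<bar>l\<bar> * (Ca / (1 + x^2)) + \<bar>1 - l\<bar> * (Cb / (1 + x^2))"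
    using assms by (intro add_mono mult_left_mono) auto
  also have "\<dots> = (\<bar>l\<bar> * Ca + \<bar>1 - l\<bar> * Cb) / (1 + x^2)" by (simp add: add_divide_distrib)
  finally show ?thesis .
qed

lemma dec_seg: assumes "dec a" "dec b" shows "dec (seg a b l)"
proof -
  from dec_C'[OF assms(1)] obtain Ca where Ca: "\<And>x. norm (a x) \<le> Ca / (1 + x^2)" by blast
  from dec_C'[OF assms(2)] obtain Cb where Cb: "\<And>x. norm (b x) \<le> Cb / (1 + x^2)" by blast
  have "continuous_on UNIV (seg a b l)"
    using assms unfolding seg_def dec_def by (intro continuous_intros) auto
  then show ?thesis unfolding dec_def using seg_bound[OF Ca Cb] by blast
qed

lemma seg_bound01:
  assumes "\<And>x. norm (a x) \<le> Ca / (1 + x^2)" "\<And>x. norm (b x) \<le> Cb / (1 + x^2)"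
    "Ca \<ge> 0" "Cb \<ge> 0" "l \<in> {0..1}"
  shows "norm (seg a b l x) \<le> (Ca + Cb) / (1 + x^2)"
proof -
  have "\<bar>l\<bar> * Ca + \<bar>1 - l\<bar> * Cb \<le> Ca + Cb"
    using assms(3-5) by (intro add_mono mult_left_le_one_le) auto
  then have "(\<bar>l\<bar> * Ca + \<bar>1 - l\<bar> * Cb) / (1 + x^2) \<le> (Ca + Cb) / (1 + x^2)"
    by (intro divide_right_mono) auto
  then show ?thesis using seg_bound[OF assms(1,2), of l x] by linarith
qed

lemma cont_Lint:
  assumes "dec a" "dec b" "r \<ge> 1"
  shows "continuous_on {0..1} (\<lambda>l. \<integral>x. norm (seg a b l x) powr r \<partial>lborel)"
proof (rule continuous_on_sequentiallyI)
  from dec_C'[OF assms(1)] obtain Ca where Ca0: "Ca \<ge> 0" and Ca: "\<And>x. norm (a x) \<le> Ca / (1 + x^2)" by blast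
  from dec_C'[OF assms(2)] obtain Cb where Cb0: "Cb \<ge> 0" and Cb: "\<And>x. norm (b x) \<le> Cb / (1 + x^2)" by blast
  define D where "D = Ca + Cb"
  have D0: "D \<ge> 0" using Ca0 Cb0 by (simp add: D_def)
  fix s :: "nat \<Rightarrow> real" and l
  assume s: "\<forall>n. s n \<in> {0..1}" and l: "l \<in> {0..1}" and lim: "s \<longlonglongrightarrow> l"
  have meas: "(\<lambda>x. norm (seg a b m x) powr r) \<in> borel_measurable lborel" for m
  proof -
    have [measurable]: "seg a b m \<in> borel_measurable lborel" using dec_meas[OF dec_seg[OF assms(1,2)]] .
    show ?thesis by measurable
  qed
  show "(\<lambda>n. \<integral>x. norm (seg a b (s n) x) powr r \<partial>lborel) \<longlonglongrightarrow> (\<integral>x. norm (seg a b l x) powr r \<partial>lborel)"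
  proof (rule integral_dominated_convergence[OF meas meas int_w[of "D powr (r - 1) * D"]])
    show "AE x in lborel. (\<lambda>n. norm (seg a b (s n) x) powr r) \<longlonglongrightarrow> norm (seg a b l x) powr r"
    proof (rule AE_I2)
      fix x
      have "(\<lambda>n. seg a b (s n) x) \<longlonglongrightarrow> seg a b l x"
        unfolding seg_def by (intro tendsto_intros lim)
      then have "(\<lambda>n. norm (seg a b (s n) x)) \<longlonglongrightarrow> norm (seg a b l x)"
        by (rule tendsto_norm)
      then show "(\<lambda>n. norm (seg a b (s n) x) powr r) \<longlonglongrightarrow> norm (seg a b l x) powr r"
        using assms(3) by (intro tendsto_powr') auto
    qed
    fix n
    show "AE x in lborel. norm (norm (seg a b (s n) x) powr r) \<le> D powr (r - 1) * D / (1 + x^2)"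
    proof (rule AE_I2)
      fix x
      have "norm (seg a b (s n) x) \<le> D / (1 + x^2)"
        unfolding D_def using seg_bound01[OF Ca Cb Ca0 Cb0 s[rule_format, of n]] .
      then show "norm (norm (seg a b (s n) x) powr r) \<le> D powr (r - 1) * D / (1 + x^2)"
        using pw_bound[OF D0 _ assms(3)] by simp
    qed
  qed
qed

lemma cont_Lnorm_fin:
  assumes "dec a" "dec b" "r \<ge> 1" "\<And>l. l \<in> {0..1} \<Longrightarrow> \<exists>x. seg a b l x \<noteq> 0"
  shows "continuous_on {0..1} (\<lambda>l. Lnorm (ereal r) (seg a b l))"
proof -
  have "continuous_on {0..1} (\<lambda>l. (\<integral>x. norm (seg a b l x) powr r \<partial>lborel) powr (1 / r))"
  proof (rule continuous_on_powr)
    show "continuous_on {0..1} (\<lambda>l. \<integral>x. norm (seg a b l x) powr r \<partial>lborel)"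
      by (rule cont_Lint[OF assms(1-3)])
    show "\<forall>l\<in>{0..1}. (\<integral>x. norm (seg a b l x) powr r \<partial>lborel) \<noteq> 0"
    proof
      fix l :: real assume "l \<in> {0..1}"
      then obtain x0 where "seg a b l x0 \<noteq> 0" using assms(4) by blast
      then show "(\<integral>x. norm (seg a b l x) powr r \<partial>lborel) \<noteq> 0"
        using Lint_pos[OF dec_seg[OF assms(1,2)] assms(3)] by force
    qed
  qed (rule continuous_on_const)
  then show ?thesis by (simp add: Lnorm_fin)
qed

lemma ess_lip:
  fixes u v :: "real \<Rightarrow> complex"
  assumes mu: "(\<lambda>x. ereal (norm (u x))) \<in> borel_measurable lborel"
    and mv: "(\<lambda>x. ereal (norm (v x))) \<in> borel_measurable lborel"
    and bu: "\<And>x. norm (u x) \<le> B" and bvu: "\<And>x. norm (v x - u x) \<le> K"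
  shows "Lnorm \<infinity> v \<le> Lnorm \<infinity> u + K"
proof -
  let ?Eu = "esssup lborel (\<lambda>x. ereal (norm (u x)))"
  let ?Ev = "esssup lborel (\<lambda>x. ereal (norm (v x)))"
  have u0: "0 \<le> ?Eu" by (rule ess_nonneg)
  have uB: "?Eu \<le> ereal B" by (rule ess_le[OF mu bu])
  obtain eu where eu: "?Eu = ereal eu" using u0 uB by (cases ?Eu) auto
  have "AE x in lborel. ereal (norm (u x)) \<le> ?Eu" by (rule esssup_AE)
  then have "AE x in lborel. ereal (norm (v x)) \<le> ereal (eu + K)"
  proof (rule eventually_mono)
    fix x assume "ereal (norm (u x)) \<le> ?Eu"
    then have "norm (u x) \<le> eu" using eu by simp
    moreover have "norm (v x) \<le> norm (u x) + norm (v x - u x)"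
      using norm_triangle_ineq[of "u x" "v x - u x"] by simp
    ultimately show "ereal (norm (v x)) \<le> ereal (eu + K)" using bvu[of x] by simp
  qed
  then have "?Ev \<le> ereal (eu + K)" by (rule esssup_I[OF mv])
  moreover have "0 \<le> ?Ev" by (rule ess_nonneg)
  ultimately have "real_of_ereal ?Ev \<le> eu + K" by (cases ?Ev) auto
  then show ?thesis using eu by (simp add: Lnorm_inf)
qed

lemma cont_Lnorm_inf:
  assumes "dec a" "dec b"
  shows "continuous_on {0..1} (\<lambda>l. Lnorm \<infinity> (seg a b l))"
proof -
  from dec_C'[OF assms(1)] obtain Ba where Ba0: "Ba \<ge> 0" and Ba: "\<And>x. norm (a x) \<le> Ba" by blast
  from dec_C'[OF assms(2)] obtain Bb where Bb0: "Bb \<ge> 0" and Bb: "\<And>x. norm (b x) \<le> Bb" by blast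
  define L where "L = Ba + Bb"
  have L0: "L \<ge> 0" using Ba0 Bb0 by (simp add: L_def)
  have diff: "norm (seg a b l x - seg a b m x) \<le> \<bar>l - m\<bar> * L" for l m x
  proof -
    have "seg a b l x - seg a b m x = complex_of_real (l - m) * (a x - b x)"
      unfolding seg_def by (simp add: algebra_simps)
    then have "norm (seg a b l x - seg a b m x) = \<bar>l - m\<bar> * norm (a x - b x)" by (simp only: norm_mult norm_of_real)
    also have "\<dots> \<le> \<bar>l - m\<bar> * L"
    proof (rule mult_left_mono)
      show "norm (a x - b x) \<le> L" unfolding L_def
        using norm_triangle_ineq4[of "a x" "b x"] Ba[of x] Bb[of x] by linarith
    qed simp
    finally show ?thesis .
  qed
  have lip: "\<bar>Lnorm \<infinity> (seg a b l) - Lnorm \<infinity> (seg a b m)\<bar> \<le> \<bar>l - m\<bar> * L" for l m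
  proof -
    from dec_C'[OF dec_seg[OF assms, of l]] obtain Bl where Bl: "\<And>x. norm (seg a b l x) \<le> Bl" by blast
    from dec_C'[OF dec_seg[OF assms, of m]] obtain Bm where Bm: "\<And>x. norm (seg a b m x) \<le> Bm" by blast
    have ml: "(\<lambda>x. ereal (norm (seg a b l x))) \<in> borel_measurable lborel" by (rule dec_ess_meas[OF dec_seg[OF assms]])
    have mm: "(\<lambda>x. ereal (norm (seg a b m x))) \<in> borel_measurable lborel" by (rule dec_ess_meas[OF dec_seg[OF assms]])
    have "norm (seg a b m x - seg a b l x) \<le> \<bar>l - m\<bar> * L" for x
      using diff[of m x l] by (simp add: abs_minus_commute)
    then have 1: "Lnorm \<infinity> (seg a b m) \<le> Lnorm \<infinity> (seg a b l) + \<bar>l - m\<bar> * L"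
      by (rule ess_lip[OF ml mm Bl])
    have 2: "Lnorm \<infinity> (seg a b l) \<le> Lnorm \<infinity> (seg a b m) + \<bar>l - m\<bar> * L"
      by (rule ess_lip[OF mm ml Bm diff])
    show ?thesis using 1 2 by linarith
  qed
  show ?thesis unfolding continuous_on_iff
  proof (intro ballI allI impI)
    fix l e :: real assume "l \<in> {0..1}" "0 < e"
    show "\<exists>d>0. \<forall>m\<in>{0..1}. dist m l < d \<longrightarrow> dist (Lnorm \<infinity> (seg a b m)) (Lnorm \<infinity> (seg a b l)) < e"
    proof (intro exI conjI ballI impI)
      show "0 < e / (L + 1)" using \<open>0 < e\<close> L0 by simp
      fix m assume "m \<in> {0..1}" "dist m l < e / (L + 1)"
      then have ml: "\<bar>m - l\<bar> * (L + 1) < e" using L0 by (simp add: dist_real_def pos_less_divide_eq)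
      have "\<bar>m - l\<bar> * L \<le> \<bar>m - l\<bar> * (L + 1)" by (intro mult_left_mono) auto
      then show "dist (Lnorm \<infinity> (seg a b m)) (Lnorm \<infinity> (seg a b l)) < e"
        using lip[of m l] ml by (simp add: dist_real_def)
    qed
  qed
qed

lemma schw_deriv: "schwartz h \<Longrightarrow> (nth_deriv k h has_vector_derivative nth_deriv (Suc k) h x) (at x)"
  unfolding schwartz_def by blast

lemma schw_cont: assumes "schwartz h" shows "continuous_on UNIV (nth_deriv k h)"
proof (rule continuous_at_imp_continuous_on, rule ballI)
  fix x :: real
  show "isCont (nth_deriv k h) x"
    using has_vector_derivative_continuous[OF schw_deriv[OF assms, of k x]] .
qed

lemma schw_dec: assumes "schwartz h" shows "dec (nth_deriv k h)"
proof -
  have b0: "bounded (range (\<lambda>x. \<bar>x\<bar> ^ 0 * norm (nth_deriv k h x)))"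
   and b2: "bounded (range (\<lambda>x. \<bar>x\<bar> ^ 2 * norm (nth_deriv k h x)))"
    using assms unfolding schwartz_def by blast+
  from b0 obtain B0 where B0: "\<forall>y\<in>range (\<lambda>x. \<bar>x\<bar> ^ 0 * norm (nth_deriv k h x)). norm y \<le> B0"
    unfolding bounded_iff by blast
  from b2 obtain B2 where B2: "\<forall>y\<in>range (\<lambda>x. \<bar>x\<bar> ^ 2 * norm (nth_deriv k h x)). norm y \<le> B2"
    unfolding bounded_iff by blast
  have "norm (nth_deriv k h x) \<le> (B0 + B2) / (1 + x^2)" for x
  proof -
    have 1: "norm (nth_deriv k h x) \<le> B0" using B0 by auto
    have 2: "x^2 * norm (nth_deriv k h x) \<le> B2" using B2 by auto
    have "(1 + x^2) * norm (nth_deriv k h x) \<le> B0 + B2" using 1 2 by (simp add: algebra_simps)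
    then show ?thesis by (simp add: pos_le_divide_eq add_pos_nonneg mult.commute)
  qed
  then show ?thesis unfolding dec_def using schw_cont[OF assms] by blast
qed

lemma mvt1:
  fixes f f' :: "real \<Rightarrow> complex"
  assumes d: "\<And>y. y \<in> closed_segment a b \<Longrightarrow> (f has_vector_derivative f' y) (at y)"
    and M: "\<And>y. y \<in> closed_segment a b \<Longrightarrow> norm (f' y) \<le> M"
  shows "norm (f b - f a) \<le> 3 * M * \<bar>b - a\<bar>"
proof -
  have aS: "a \<in> closed_segment a b" by simp
  have "norm (f b - f a - (b - a) *\<^sub>R f' a) \<le> norm (b - a) * (2 * M)"
  proof (rule vector_differentiable_bound_linearization[where S="closed_segment a b"])
    show "\<And>x. x \<in> closed_segment a b \<Longrightarrow> (f has_vector_derivative f' x) (at x within closed_segment a b)"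
      using d by (rule has_vector_derivative_at_within)
    show "\<And>x. x \<in> closed_segment a b \<Longrightarrow> norm (f' x - f' a) \<le> 2 * M"
    proof -
      fix x assume "x \<in> closed_segment a b"
      then have "norm (f' x) \<le> M" "norm (f' a) \<le> M" using M aS by auto
      then show "norm (f' x - f' a) \<le> 2 * M" using norm_triangle_ineq4[of "f' x" "f' a"] by linarith
    qed
  qed (use aS in auto)
  moreover have "norm ((b - a) *\<^sub>R f' a) \<le> \<bar>b - a\<bar> * M"
    using M[OF aS] by (simp add: mult_left_mono)
  moreover have "norm (f b - f a) \<le> norm (f b - f a - (b - a) *\<^sub>R f' a) + norm ((b - a) *\<^sub>R f' a)"
    using norm_triangle_ineq[of "f b - f a - (b - a) *\<^sub>R f' a" "(b - a) *\<^sub>R f' a"] by simp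
  ultimately show ?thesis by (simp add: algebra_simps)
qed

lemma mvt2:
  fixes f f1 f2 :: "real \<Rightarrow> complex"
  assumes d1: "\<And>y. y \<in> closed_segment a b \<Longrightarrow> (f has_vector_derivative f1 y) (at y)"
    and d2: "\<And>y. y \<in> closed_segment a b \<Longrightarrow> (f1 has_vector_derivative f2 y) (at y)"
    and M: "\<And>y. y \<in> closed_segment a b \<Longrightarrow> norm (f2 y) \<le> M"
  shows "norm (f b - f a - (b - a) *\<^sub>R f1 a) \<le> 3 * M * (b - a)^2"
proof -
  have aS: "a \<in> closed_segment a b" by simp
  have "norm (f b - f a - (b - a) *\<^sub>R f1 a) \<le> norm (b - a) * (3 * M * \<bar>b - a\<bar>)"
  proof (rule vector_differentiable_bound_linearization[where S="closed_segment a b"])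
    show "\<And>x. x \<in> closed_segment a b \<Longrightarrow> (f has_vector_derivative f1 x) (at x within closed_segment a b)"
      using d1 by (rule has_vector_derivative_at_within)
    show "\<And>x. x \<in> closed_segment a b \<Longrightarrow> norm (f1 x - f1 a) \<le> 3 * M * \<bar>b - a\<bar>"
    proof -
      fix y assume y: "y \<in> closed_segment a b"
      have sub: "closed_segment a y \<subseteq> closed_segment a b"
        using aS y by (intro closed_segment_subset) auto
      have "norm (f1 y - f1 a) \<le> 3 * M * \<bar>y - a\<bar>"
        using sub by (intro mvt1[of a y f1 f2 M]) (auto intro: d2 M)
      moreover have "\<bar>y - a\<bar> \<le> \<bar>b - a\<bar>"
        using dist_in_closed_segment[OF y] by (simp add: dist_real_def abs_minus_commute)
      moreover have "M \<ge> 0" using M[OF aS] norm_ge_zero order_trans by blast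
      ultimately show "norm (f1 y - f1 a) \<le> 3 * M * \<bar>b - a\<bar>"
        by (meson mult_left_mono order_trans zero_le_mult_iff zero_le_numeral)
    qed
  qed (use aS in auto)
  also have "\<dots> = 3 * M * (b - a)^2" by (simp add: power2_eq_square abs_mult_self_eq)
  finally show ?thesis .
qed

lemma weight_shift:
  fixes x y :: real
  assumes "\<bar>y - x\<bar> \<le> 1" "C \<ge> 0"
  shows "C / (1 + y^2) \<le> 3 * C / (1 + x^2)"
proof -
  define d where "d = x - y"
  have x: "x = y + d" by (simp add: d_def)
  have "\<bar>d\<bar>^2 \<le> 1" by (rule power_le_one) (use assms(1) in \<open>auto simp: d_def abs_minus_commute\<close>)
  then have d2: "d^2 \<le> 1" by simp
  have e1: "x^2 = y^2 + 2*(y*d) + d^2" unfolding x by (simp add: power2_sum)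
  have e2: "0 \<le> y^2 - 2*(y*d) + d^2" using power2_diff[of y d] zero_le_power2[of "y-d"] by linarith
  have "(1 + x^2) \<le> 3 * (1 + y^2)" using e1 e2 d2 zero_le_power2[of y] by (smt (verit))
  then have "C * (1 + x^2) \<le> C * (3 * (1 + y^2))" using assms(2) by (rule mult_left_mono)
  then show ?thesis by (simp add: divide_simps add_pos_nonneg) (simp add: algebra_simps)
qed

lemma int_mul_cis:
  fixes g :: "real \<Rightarrow> complex"
  assumes "integrable lborel g" "continuous_on UNIV \<theta>"
  shows "integrable lborel (\<lambda>x. g x * cis (\<theta> x))"
proof -
  have [measurable]: "g \<in> borel_measurable lborel" using assms(1) by (rule borel_measurable_integrable)
  have [measurable]: "(\<lambda>x. cis (\<theta> x)) \<in> borel_measurable lborel"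
    using borel_measurable_continuous_onI[OF continuous_on_cis[OF assms(2)]] by simp
  have m: "(\<lambda>x. g x * cis (\<theta> x)) \<in> borel_measurable lborel" by measurable
  have b: "norm (g x * cis (\<theta> x)) \<le> norm (g x)" for x by (simp add: norm_mult)
  show ?thesis by (rule Bochner_Integration.integrable_bound[OF assms(1) m AE_I2[OF b]])
qed

lemma four_int: "dec h \<Longrightarrow> integrable lborel (\<lambda>x. h x * cis (- 2 * pi * x * \<xi>))"
  by (intro int_mul_cis dec_integrable) (auto intro!: continuous_intros)

lemma four_norm: assumes "dec h" shows "norm (fourier h \<xi>) \<le> (\<integral>x. norm (h x) \<partial>lborel)"
proof -
  have "norm (fourier h \<xi>) \<le> (\<integral>x. norm (h x * cis (- 2 * pi * x * \<xi>)) \<partial>lborel)"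
    unfolding fourier_def by (rule integral_norm_bound)
  then show ?thesis by (simp add: norm_mult)
qed

lemma four_seg: assumes "dec a" "dec b" shows "fourier (seg a b l) = seg (fourier a) (fourier b) l"
proof
  fix \<xi>
  let ?c = "\<lambda>x. cis (- 2 * pi * x * \<xi>)"
  have ia: "integrable lborel (\<lambda>x. complex_of_real l * (a x * ?c x))" using four_int[OF assms(1)] by simp
  have ib: "integrable lborel (\<lambda>x. complex_of_real (1 - l) * (b x * ?c x))" using four_int[OF assms(2)] by simp
  have "fourier (seg a b l) \<xi> = (\<integral>x. complex_of_real l * (a x * ?c x) + complex_of_real (1 - l) * (b x * ?c x) \<partial>lborel)"
    unfolding fourier_def seg_def by (simp add: algebra_simps)
  also have "\<dots> = complex_of_real l * fourier a \<xi> + complex_of_real (1 - l) * fourier b \<xi>"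
    using Bochner_Integration.integral_add[OF ia ib] unfolding fourier_def by simp
  finally show "fourier (seg a b l) \<xi> = seg (fourier a) (fourier b) l \<xi>" unfolding seg_def .
qed

lemma four_cont: assumes "dec h" shows "continuous_on UNIV (fourier h)"
proof (rule continuous_on_sequentiallyI)
  fix s :: "nat \<Rightarrow> real" and \<xi> assume lim: "s \<longlonglongrightarrow> \<xi>"
  have meas: "(\<lambda>x. h x * cis (- 2 * pi * x * t)) \<in> borel_measurable lborel" for t
    using four_int[OF assms] by (rule borel_measurable_integrable)
  have w: "integrable lborel (\<lambda>x. norm (h x))" using dec_integrable[OF assms] by simp
  show "(\<lambda>n. fourier h (s n)) \<longlonglongrightarrow> fourier h \<xi>"
    unfolding fourier_def
  proof (rule integral_dominated_convergence[OF meas meas w])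
    show "AE x in lborel. (\<lambda>n. h x * cis (- 2 * pi * x * s n)) \<longlonglongrightarrow> h x * cis (- 2 * pi * x * \<xi>)"
      by (rule AE_I2) (intro tendsto_intros lim)
    show "\<And>n. AE x in lborel. norm (h x * cis (- 2 * pi * x * s n)) \<le> norm (h x)"
      by (rule AE_I2) (simp add: norm_mult)
  qed
qed

lemma integral_shift:
  fixes F :: "real \<Rightarrow> complex"
  shows "(\<integral>x. F x \<partial>lborel) = (\<integral>x. F (x + c) \<partial>lborel)"
  using lborel_integral_real_affine[where c=1 and t=c and f=F] by (simp add: add.commute)

lemma integrable_shift:
  fixes F :: "real \<Rightarrow> complex"
  shows "integrable lborel F \<Longrightarrow> integrable lborel (\<lambda>x. F (x + c))"
  using lborel_integrable_real_affine[where c=1 and t=c and f=F] by (simp add: add.commute)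

lemma d2_bound:
  assumes "schwartz h" "\<bar>\<delta>\<bar> \<le> 1/2" "C2 \<ge> 0"
    and C2: "\<And>y. norm (nth_deriv (Suc (Suc 0)) h y) \<le> C2 / (1 + y^2)"
  shows "norm (h x - 2 * h (x + \<delta>) + h (x + 2 * \<delta>)) \<le> \<delta>^2 * (18 * C2 / (1 + x^2))"
proof -
  define M where "M = 3 * C2 / (1 + x^2)"
  have d0: "(h has_vector_derivative nth_deriv (Suc 0) h y) (at y)" for y
    using schw_deriv[OF assms(1), of 0 y] by simp
  have d1: "(nth_deriv (Suc 0) h has_vector_derivative nth_deriv (Suc (Suc 0)) h y) (at y)" for y
    using schw_deriv[OF assms(1), of "Suc 0" y] by simp
  have Mb: "norm (nth_deriv (Suc (Suc 0)) h y) \<le> M"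
    if "y \<in> closed_segment (x + \<delta>) b" "\<bar>b - (x + \<delta>)\<bar> \<le> \<bar>\<delta>\<bar>" for y b
  proof -
    have "dist y (x + \<delta>) \<le> dist (x + \<delta>) b" using dist_in_closed_segment[OF that(1)] by simp
    then have "\<bar>y - (x + \<delta>)\<bar> \<le> \<bar>\<delta>\<bar>" using that(2) by (simp add: dist_real_def abs_minus_commute)
    then have "\<bar>y - x\<bar> \<le> 1" using assms(2) by linarith
    then show ?thesis using C2[of y] weight_shift[of y x C2] assms(3) unfolding M_def by linarith
  qed
  have P1: "norm (h (x + 2 * \<delta>) - h (x + \<delta>) - \<delta> *\<^sub>R nth_deriv (Suc 0) h (x + \<delta>)) \<le> 3 * M * \<delta>^2"
    using mvt2[of "x + \<delta>" "x + 2 * \<delta>" h "nth_deriv (Suc 0) h" "nth_deriv (Suc (Suc 0)) h" M]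
      d0 d1 Mb[of _ "x + 2 * \<delta>"] by simp
  have P2: "norm (h x - h (x + \<delta>) + \<delta> *\<^sub>R nth_deriv (Suc 0) h (x + \<delta>)) \<le> 3 * M * \<delta>^2"
    using mvt2[of "x + \<delta>" x h "nth_deriv (Suc 0) h" "nth_deriv (Suc (Suc 0)) h" M]
      d0 d1 Mb[of _ x] by simp
  have eq: "h x - 2 * h (x + \<delta>) + h (x + 2 * \<delta>) =
      (h (x + 2 * \<delta>) - h (x + \<delta>) - \<delta> *\<^sub>R nth_deriv (Suc 0) h (x + \<delta>)) +
      (h x - h (x + \<delta>) + \<delta> *\<^sub>R nth_deriv (Suc 0) h (x + \<delta>))" by (simp add: algebra_simps)
  have "norm (h x - 2 * h (x + \<delta>) + h (x + 2 * \<delta>)) \<le> 3 * M * \<delta>^2 + 3 * M * \<delta>^2"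
    unfolding eq using norm_triangle_le[OF add_mono[OF P1 P2]] by simp
  also have "\<dots> = \<delta>^2 * (18 * C2 / (1 + x^2))" unfolding M_def by (simp add: field_simps)
  finally show ?thesis .
qed

lemma cis_shift1: "cis (a - pi) = - cis a"
  by (simp add: complex_eq_iff cos_diff sin_diff)

lemma cis_shift2: "cis (a - 2 * pi) = cis a"
  by (simp add: complex_eq_iff cos_diff sin_diff)

lemma four_decay:
  assumes "schwartz h"
  shows "\<exists>K. \<forall>\<xi>. 1 \<le> \<bar>\<xi>\<bar> \<longrightarrow> norm (fourier h \<xi>) \<le> K / \<xi>^2"
proof -
  have dh: "dec h" using schw_dec[OF assms, of 0] by simp
  from dec_C'[OF schw_dec[OF assms, of "Suc (Suc 0)"]] obtain C2 where C20: "C2 \<ge> 0"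
    and C2: "\<And>y. norm (nth_deriv (Suc (Suc 0)) h y) \<le> C2 / (1 + y^2)" by blast
  define I0 where "I0 = (\<integral>x. 18 * C2 / (1 + x^2) \<partial>lborel)"
  have "norm (fourier h \<xi>) \<le> I0 / 16 / \<xi>^2" if \<xi>: "1 \<le> \<bar>\<xi>\<bar>" for \<xi>
  proof -
    have \<xi>0: "\<xi> \<noteq> 0" using \<xi> by auto
    define \<delta> where "\<delta> = 1 / (2 * \<xi>)"
    have \<delta>\<xi>: "\<delta> * \<xi> = 1/2" using \<xi>0 by (simp add: \<delta>_def)
    have "\<bar>\<delta>\<bar> = 1 / (2 * \<bar>\<xi>\<bar>)" by (simp add: \<delta>_def abs_mult)
    also have "\<dots> \<le> 1 / 2" using \<xi> by (intro divide_left_mono) auto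
    finally have \<delta>b: "\<bar>\<delta>\<bar> \<le> 1/2" .
    define E where "E = (\<lambda>x. cis (- 2 * pi * x * \<xi>))"
    have E1: "E (x + \<delta>) = - E x" for x
    proof -
      have "- 2 * pi * (x + \<delta>) * \<xi> = - 2 * pi * x * \<xi> - 2 * pi * (\<delta> * \<xi>)" by (simp add: algebra_simps)
      also have "\<dots> = - 2 * pi * x * \<xi> - pi" using \<delta>\<xi> by simp
      finally show ?thesis unfolding E_def using cis_shift1 by simp
    qed
    have E2: "E (x + 2 * \<delta>) = E x" for x
    proof -
      have "- 2 * pi * (x + 2 * \<delta>) * \<xi> = - 2 * pi * x * \<xi> - 4 * pi * (\<delta> * \<xi>)" by (simp add: algebra_simps)
      also have "\<dots> = - 2 * pi * x * \<xi> - 2 * pi" using \<delta>\<xi> by simp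
      finally show ?thesis unfolding E_def using cis_shift2 by simp
    qed
    define G where "G = (\<lambda>c x. h (x + c) * E x)"
    have intG: "integrable lborel (G c)" for c
      unfolding G_def E_def by (intro int_mul_cis integrable_shift dec_integrable dh) (auto intro!: continuous_intros)
    have f0: "fourier h \<xi> = integral\<^sup>L lborel (G 0)" unfolding fourier_def G_def E_def by simp
    have f1: "fourier h \<xi> = - integral\<^sup>L lborel (G \<delta>)"
    proof -
      have "fourier h \<xi> = (\<integral>x. h (x + \<delta>) * E (x + \<delta>) \<partial>lborel)"
        unfolding fourier_def E_def by (rule integral_shift)
      also have "\<dots> = (\<integral>x. - G \<delta> x \<partial>lborel)" by (simp add: E1 G_def)
      finally show ?thesis by simp
    qed
    have f2: "fourier h \<xi> = integral\<^sup>L lborel (G (2 * \<delta>))"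
    proof -
      have "fourier h \<xi> = (\<integral>x. h (x + 2 * \<delta>) * E (x + 2 * \<delta>) \<partial>lborel)"
        unfolding fourier_def E_def by (rule integral_shift)
      also have "\<dots> = (\<integral>x. G (2 * \<delta>) x \<partial>lborel)" by (simp add: E2 G_def)
      finally show ?thesis by simp
    qed
    have feq: "(\<lambda>x. (h x - 2 * h (x + \<delta>) + h (x + 2 * \<delta>)) * E x) = (\<lambda>x. G 0 x - 2 * G \<delta> x + G (2 * \<delta>) x)"
      by (auto simp: G_def algebra_simps)
    have intS: "integrable lborel (\<lambda>x. (h x - 2 * h (x + \<delta>) + h (x + 2 * \<delta>)) * E x)"
      unfolding feq using intG by simp
    have sum: "(\<integral>x. (h x - 2 * h (x + \<delta>) + h (x + 2 * \<delta>)) * E x \<partial>lborel) = 4 * fourier h \<xi>"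
    proof -
      have "(\<integral>x. (h x - 2 * h (x + \<delta>) + h (x + 2 * \<delta>)) * E x \<partial>lborel)
          = integral\<^sup>L lborel (G 0) - 2 * integral\<^sup>L lborel (G \<delta>) + integral\<^sup>L lborel (G (2 * \<delta>))"
        unfolding feq using intG by simp
      then show ?thesis using f0 f1 f2 by simp
    qed
    have pw: "norm ((h x - 2 * h (x + \<delta>) + h (x + 2 * \<delta>)) * E x) \<le> \<delta>^2 * (18 * C2 / (1 + x^2))" for x
      using d2_bound[OF assms \<delta>b C20 C2, of x] by (simp add: E_def norm_mult)
    have "norm (4 * fourier h \<xi>) \<le> (\<integral>x. norm ((h x - 2 * h (x + \<delta>) + h (x + 2 * \<delta>)) * E x) \<partial>lborel)"
      unfolding sum[symmetric] by (rule integral_norm_bound)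
    also have "\<dots> \<le> (\<integral>x. \<delta>^2 * (18 * C2 / (1 + x^2)) \<partial>lborel)"
    proof (rule integral_mono)
      show "integrable lborel (\<lambda>x. norm ((h x - 2 * h (x + \<delta>) + h (x + 2 * \<delta>)) * E x))"
        using intS by simp
      show "integrable lborel (\<lambda>x. \<delta>^2 * (18 * C2 / (1 + x^2)))"
        using int_w[of "\<delta>^2 * (18 * C2)"] by simp
    qed (rule pw)
    also have "\<dots> = \<delta>^2 * I0" unfolding I0_def by (rule integral_mult_right_zero)
    finally have 4: "4 * norm (fourier h \<xi>) \<le> \<delta>^2 * I0" by (simp add: norm_mult)
    have d2: "\<delta>^2 = 1 / (4 * \<xi>^2)" by (simp add: \<delta>_def power2_eq_square)
    have "norm (fourier h \<xi>) \<le> I0 / (16 * \<xi>^2)" using 4 unfolding d2 by (simp add: field_simps)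
    then show ?thesis by (simp add: field_simps)
  qed
  then show ?thesis by blast
qed

lemma four_dec: assumes "schwartz h" shows "dec (fourier h)"
proof -
  have dh: "dec h" using schw_dec[OF assms, of 0] by simp
  define A where "A = (\<integral>x. norm (h x) \<partial>lborel)"
  have A0: "A \<ge> 0" unfolding A_def by (intro integral_nonneg_AE) auto
  have nA: "norm (fourier h \<xi>) \<le> A" for \<xi> using four_norm[OF dh] unfolding A_def .
  from four_decay[OF assms] obtain K where K: "\<forall>\<xi>. 1 \<le> \<bar>\<xi>\<bar> \<longrightarrow> norm (fourier h \<xi>) \<le> K / \<xi>^2" by blast
  have "norm (fourier h 1) \<le> K" using K[rule_format, of 1] by simp
  then have K0: "K \<ge> 0" by (meson norm_ge_zero order_trans)
  have "norm (fourier h \<xi>) \<le> (2 * A + 2 * K) / (1 + \<xi>^2)" for \<xi>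
  proof (cases "1 \<le> \<bar>\<xi>\<bar>")
    case True
    have "1 \<le> \<bar>\<xi>\<bar>^2" using True by (rule one_le_power)
    then have s: "1 \<le> \<xi>^2" by simp
    have p: "0 < \<xi>^2" using s by linarith
    have p1: "0 < 1 + \<xi>^2" using s by linarith
    have kk: "K * 1 \<le> K * \<xi>^2" by (rule mult_left_mono[OF s K0])
    have a: "K / \<xi>^2 \<le> K" using kk p by (simp add: divide_le_eq)
    have "K / \<xi>^2 * (1 + \<xi>^2) = K / \<xi>^2 + K" using p by (simp add: distrib_left)
    also have "\<dots> \<le> 2 * K" using a by simp
    finally have "K / \<xi>^2 * (1 + \<xi>^2) \<le> 2 * A + 2 * K" using A0 by linarith
    then have "K / \<xi>^2 \<le> (2 * A + 2 * K) / (1 + \<xi>^2)" by (rule mult_imp_le_div_pos[OF p1])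
    moreover have "norm (fourier h \<xi>) \<le> K / \<xi>^2" using K[rule_format, OF True] .
    ultimately show ?thesis by linarith
  next
    case False
    have "\<bar>\<xi>\<bar>^2 \<le> 1" using False by (intro power_le_one) auto
    then have s: "\<xi>^2 \<le> 1" by simp
    have p1: "0 < 1 + \<xi>^2" by (simp add: add_pos_nonneg)
    have "A * (1 + \<xi>^2) \<le> A * 2" using s A0 by (intro mult_left_mono) auto
    then have "A * (1 + \<xi>^2) \<le> 2 * A + 2 * K" using K0 by linarith
    then have "A \<le> (2 * A + 2 * K) / (1 + \<xi>^2)" by (rule mult_imp_le_div_pos[OF p1])
    then show ?thesis using nA[of \<xi>] by linarith
  qed
  then show ?thesis unfolding dec_def using four_cont[OF dh] by blast
qed

lemma rd_density:
  fixes f :: "real \<Rightarrow> real"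
  assumes i: "integrable lborel f" and nn: "\<And>x. f x \<ge> 0" and c: "(\<integral>x. f x \<partial>lborel) = c" "c > 0"
  shows "real_distribution (density lborel (\<lambda>x. ennreal (f x / c)))"
proof -
  have [measurable]: "f \<in> borel_measurable lborel" using i by (rule borel_measurable_integrable)
  have i2: "integrable lborel (\<lambda>x. f x / c)" using i by simp
  have "emeasure (density lborel (\<lambda>x. ennreal (f x / c))) (space (density lborel (\<lambda>x. ennreal (f x / c))))
      = (\<integral>\<^sup>+ x. ennreal (f x / c) \<partial>lborel)"
    by (simp add: emeasure_density)
  also have "\<dots> = ennreal (\<integral>x. f x / c \<partial>lborel)"
    by (rule nn_integral_eq_integral[OF i2]) (use nn c in auto)
  also have "\<dots> = 1" using c by simp
  finally have "prob_space (density lborel (\<lambda>x. ennreal (f x / c)))" by (rule prob_spaceI)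
  then show ?thesis
    unfolding real_distribution_def real_distribution_axioms_def by simp
qed

lemma char_density:
  fixes f :: "real \<Rightarrow> real"
  assumes i: "integrable lborel f" and nn: "\<And>x. f x \<ge> 0" and c: "c > 0"
  shows "char (density lborel (\<lambda>x. ennreal (f x / c))) t = (\<integral>x. complex_of_real (f x) * cis (t * x) \<partial>lborel) / c"
proof -
  have [measurable]: "f \<in> borel_measurable lborel" using i by (rule borel_measurable_integrable)
  have "char (density lborel (\<lambda>x. ennreal (f x / c))) t = (\<integral>x. (f x / c) *\<^sub>R iexp (t * x) \<partial>lborel)"
    unfolding char_def by (rule integral_density) (use nn c in auto)
  also have "\<dots> = (\<integral>x. complex_of_real (f x) * cis (t * x) / c \<partial>lborel)"
    by (rule Bochner_Integration.integral_cong) (auto simp: scaleR_conv_of_real cis_conv_exp mult.commute)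
  also have "\<dots> = (\<integral>x. complex_of_real (f x) * cis (t * x) \<partial>lborel) / c" by simp
  finally show ?thesis .
qed

lemma four_zero_real:
  fixes u :: "real \<Rightarrow> real"
  assumes cu: "continuous_on UNIV u" and iu: "integrable lborel u"
    and z: "\<And>t. (\<integral>x. complex_of_real (u x) * cis (t * x) \<partial>lborel) = 0"
  shows "u x0 = 0"
proof -
  define up where "up = (\<lambda>x. max (u x) 0)"
  define um where "um = (\<lambda>x. max (- u x) 0)"
  have uu: "u x = up x - um x" for x by (simp add: up_def um_def max_def)
  have iup: "integrable lborel up" unfolding up_def using iu by (intro integrable_max) auto
  have ium: "integrable lborel um" unfolding um_def using iu by (intro integrable_max) auto
  have nup: "up x \<ge> 0" for x by (simp add: up_def)
  have num: "um x \<ge> 0" for x by (simp add: um_def)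
  have eqt: "(\<integral>x. complex_of_real (up x) * cis (t * x) \<partial>lborel) = (\<integral>x. complex_of_real (um x) * cis (t * x) \<partial>lborel)" for t
  proof -
    have i1: "integrable lborel (\<lambda>x. complex_of_real (up x) * cis (t * x))"
      by (intro int_mul_cis integrable_of_real iup) (auto intro!: continuous_intros)
    have i2: "integrable lborel (\<lambda>x. complex_of_real (um x) * cis (t * x))"
      by (intro int_mul_cis integrable_of_real ium) (auto intro!: continuous_intros)
    have "(\<lambda>x. complex_of_real (u x) * cis (t * x)) = (\<lambda>x. complex_of_real (up x) * cis (t * x) - complex_of_real (um x) * cis (t * x))"
      by (rule ext) (simp add: uu left_diff_distrib)
    then have "0 = (\<integral>x. complex_of_real (up x) * cis (t * x) \<partial>lborel) - (\<integral>x. complex_of_real (um x) * cis (t * x) \<partial>lborel)"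
      using z[of t] Bochner_Integration.integral_diff[OF i1 i2] by simp
    then show ?thesis by simp
  qed
  define c where "c = (\<integral>x. up x \<partial>lborel)"
  have cm: "(\<integral>x. um x \<partial>lborel) = c"
  proof -
    have "complex_of_real (\<integral>x. up x \<partial>lborel) = complex_of_real (\<integral>x. um x \<partial>lborel)"
      using eqt[of 0] by simp
    then show ?thesis unfolding c_def by simp
  qed
  have c0: "c \<ge> 0" unfolding c_def using nup by (intro integral_nonneg_AE) auto
  have ae: "AE x in lborel. up x = um x"
  proof (cases "c = 0")
    case True
    have "AE x in lborel. up x = 0"
      using integral_nonneg_eq_0_iff_AE[OF iup] nup True unfolding c_def by simp
    moreover have "AE x in lborel. um x = 0"
      using integral_nonneg_eq_0_iff_AE[OF ium] num True cm by simp
    ultimately show ?thesis by eventually_elim simp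
  next
    case False
    then have cpos: "c > 0" using c0 by simp
    have "char (density lborel (\<lambda>x. ennreal (up x / c))) = char (density lborel (\<lambda>x. ennreal (um x / c)))"
    proof
      fix t
      show "char (density lborel (\<lambda>x. ennreal (up x / c))) t = char (density lborel (\<lambda>x. ennreal (um x / c))) t"
        using char_density[OF iup nup cpos, of t] char_density[OF ium num cpos, of t] eqt[of t] by simp
    qed
    then have "density lborel (\<lambda>x. ennreal (up x / c)) = density lborel (\<lambda>x. ennreal (um x / c))"
      using Levy_uniqueness rd_density[OF iup nup c_def[symmetric] cpos] rd_density[OF ium num cm cpos] by blast
    moreover have "(\<lambda>x. ennreal (up x / c)) \<in> borel_measurable lborel" "(\<lambda>x. ennreal (um x / c)) \<in> borel_measurable lborel"
      using iup ium by (auto intro!: measurable_compose[OF _ measurable_ennreal] borel_measurable_integrable borel_measurable_divide)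
    ultimately have "AE x in lborel. ennreal (up x / c) = ennreal (um x / c)"
      using sigma_finite_measure.density_unique_iff[OF sigma_finite_lborel] by blast
    then show ?thesis
    proof (rule eventually_mono)
      fix x assume "ennreal (up x / c) = ennreal (um x / c)"
      then have "up x / c = um x / c" using nup[of x] num[of x] cpos by (simp add: ennreal_inj)
      then show "up x = um x" using cpos by simp
    qed
  qed
  have "AE x in lborel. complex_of_real (u x) = 0"
    using ae by (rule eventually_mono) (simp add: uu)
  then have "complex_of_real (u x0) = 0"
    by (rule cont_AE_zero[rotated]) (auto intro!: continuous_intros cu)
  then show ?thesis by simp
qed

lemma four_inj_re:
  assumes dh: "dec h" and z: "\<And>\<xi>. fourier h \<xi> = 0"
  shows "Re (h x0) = 0"
proof -
  have z1: "(\<integral>x. h x * cis (t * x) \<partial>lborel) = 0" for t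
  proof -
    have e: "- 2 * pi * x * (- t / (2 * pi)) = t * x" for x using pi_gt_zero by (simp add: field_simps)
    show ?thesis using z[of "- t / (2 * pi)"] unfolding fourier_def e .
  qed
  have z2: "(\<integral>x. cnj (h x) * cis (t * x) \<partial>lborel) = 0" for t
  proof -
    have "(\<integral>x. cnj (h x) * cis (t * x) \<partial>lborel) = (\<integral>x. cnj (h x * cis ((- t) * x)) \<partial>lborel)"
      by (simp add: cis_cnj)
    also have "\<dots> = cnj (\<integral>x. h x * cis ((- t) * x) \<partial>lborel)" by (rule Bochner_Integration.integral_cnj)
    also have "\<dots> = 0" using z1[of "-t"] by simp
    finally show ?thesis .
  qed
  have ih: "integrable lborel h" by (rule dec_integrable[OF dh])
  have r: "(\<integral>x. complex_of_real (Re (h x)) * cis (t * x) \<partial>lborel) = 0" for t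
  proof -
    have i1: "integrable lborel (\<lambda>x. h x * cis (t * x))"
      by (intro int_mul_cis ih) (auto intro!: continuous_intros)
    have i2: "integrable lborel (\<lambda>x. cnj (h x) * cis (t * x))"
      by (intro int_mul_cis integrable_cnj ih) (auto intro!: continuous_intros)
    have re_eq: "complex_of_real (Re z) = (z + cnj z) / 2" for z by (simp add: complex_eq_iff)
    have "(\<lambda>x. complex_of_real (Re (h x)) * cis (t * x)) = (\<lambda>x. (h x * cis (t * x) + cnj (h x) * cis (t * x)) / 2)"
      by (rule ext) (simp add: re_eq field_simps)
    then have "(\<integral>x. complex_of_real (Re (h x)) * cis (t * x) \<partial>lborel)
        = ((\<integral>x. h x * cis (t * x) \<partial>lborel) + (\<integral>x. cnj (h x) * cis (t * x) \<partial>lborel)) / 2"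
      using Bochner_Integration.integral_add[OF i1 i2] by simp
    then show ?thesis using z1 z2 by simp
  qed
  show ?thesis
  proof (rule four_zero_real[OF _ _ r])
    show "continuous_on UNIV (\<lambda>x. Re (h x))" using dh unfolding dec_def by (auto intro!: continuous_intros)
    show "integrable lborel (\<lambda>x. Re (h x))" using ih by simp
  qed
qed

lemma four_inj:
  assumes dh: "dec h" and z: "\<And>\<xi>. fourier h \<xi> = 0"
  shows "h x0 = 0"
proof -
  define h' where "h' = (\<lambda>x. - \<i> * h x)"
  have "dec h'"
  proof -
    from dec_C'[OF dh] obtain C where C: "\<forall>x. norm (h x) \<le> C / (1 + x^2)" by blast
    have "continuous_on UNIV h'" using dh unfolding dec_def h'_def by (auto intro!: continuous_intros)
    moreover have "\<forall>x. norm (h' x) \<le> C / (1 + x^2)" using C by (simp add: h'_def norm_mult)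
    ultimately show ?thesis unfolding dec_def by blast
  qed
  moreover have "fourier h' \<xi> = 0" for \<xi>
  proof -
    have "fourier h' \<xi> = (\<integral>x. - \<i> * (h x * cis (- 2 * pi * x * \<xi>)) \<partial>lborel)"
      unfolding fourier_def h'_def by (simp add: mult.assoc)
    also have "\<dots> = - \<i> * fourier h \<xi>" unfolding fourier_def by (rule integral_mult_right_zero)
    finally show ?thesis using z by simp
  qed
  ultimately have "Re (h' x0) = 0" by (rule four_inj_re)
  then have "Im (h x0) = 0" by (simp add: h'_def)
  moreover have "Re (h x0) = 0" by (rule four_inj_re[OF dh z])
  ultimately show ?thesis by (simp add: complex_eq_iff)
qed

lemma nth_deriv_seg:
  assumes "schwartz a" "schwartz b"
  shows "nth_deriv k (seg a b l) = seg (nth_deriv k a) (nth_deriv k b) l"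
proof (induction k)
  case 0 then show ?case by simp
next
  case (Suc k)
  show ?case
  proof
    fix x
    have "(seg (nth_deriv k a) (nth_deriv k b) l has_vector_derivative seg (nth_deriv (Suc k) a) (nth_deriv (Suc k) b) l x) (at x)"
      unfolding seg_def
      by (intro has_vector_derivative_add has_vector_derivative_mult_right schw_deriv assms)
    then show "nth_deriv (Suc k) (seg a b l) x = seg (nth_deriv (Suc k) a) (nth_deriv (Suc k) b) l x"
      using Suc.IH by (simp add: vector_derivative_at)
  qed
qed

lemma schwartz_seg:
  assumes "schwartz a" "schwartz b"
  shows "schwartz (seg a b l)"
  unfolding schwartz_def
proof (intro conjI allI)
  fix k x
  have "(seg (nth_deriv k a) (nth_deriv k b) l has_vector_derivative seg (nth_deriv (Suc k) a) (nth_deriv (Suc k) b) l x) (at x)"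
    unfolding seg_def
    by (intro has_vector_derivative_add has_vector_derivative_mult_right schw_deriv assms)
  then show "(nth_deriv k (seg a b l) has_vector_derivative nth_deriv (Suc k) (seg a b l) x) (at x)"
    by (simp only: nth_deriv_seg[OF assms])
next
  fix m k
  have ba: "bounded (range (\<lambda>x. \<bar>x\<bar> ^ m * norm (nth_deriv k a x)))"
    and bb: "bounded (range (\<lambda>x. \<bar>x\<bar> ^ m * norm (nth_deriv k b x)))"
    using assms unfolding schwartz_def by blast+
  from ba obtain Ba where Ba: "\<forall>y\<in>range (\<lambda>x. \<bar>x\<bar> ^ m * norm (nth_deriv k a x)). norm y \<le> Ba"
    unfolding bounded_iff by blast
  from bb obtain Bb where Bb: "\<forall>y\<in>range (\<lambda>x. \<bar>x\<bar> ^ m * norm (nth_deriv k b x)). norm y \<le> Bb"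
    unfolding bounded_iff by blast
  have bd: "norm (\<bar>x\<bar> ^ m * norm (nth_deriv k (seg a b l) x)) \<le> \<bar>l\<bar> * Ba + \<bar>1 - l\<bar> * Bb" for x
  proof -
    let ?A = "nth_deriv k a x" and ?B = "nth_deriv k b x" and ?X = "\<bar>x\<bar> ^ m"
    have a1: "?X * norm ?A \<le> Ba" using Ba by auto
    have b1: "?X * norm ?B \<le> Bb" using Bb by auto
    have X0: "?X \<ge> 0" by simp
    have "norm (nth_deriv k (seg a b l) x) = norm (complex_of_real l * ?A + complex_of_real (1 - l) * ?B)"
      unfolding nth_deriv_seg[OF assms] by (simp only: seg_def)
    also have "\<dots> \<le> norm (complex_of_real l * ?A) + norm (complex_of_real (1 - l) * ?B)"
      by (rule norm_triangle_ineq)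
    also have "\<dots> = \<bar>l\<bar> * norm ?A + \<bar>1 - l\<bar> * norm ?B" by (simp only: norm_mult norm_of_real)
    finally have n1: "norm (nth_deriv k (seg a b l) x) \<le> \<bar>l\<bar> * norm ?A + \<bar>1 - l\<bar> * norm ?B" .
    have "?X * norm (nth_deriv k (seg a b l) x) \<le> ?X * (\<bar>l\<bar> * norm ?A + \<bar>1 - l\<bar> * norm ?B)"
      using n1 X0 by (rule mult_left_mono)
    also have "\<dots> = \<bar>l\<bar> * (?X * norm ?A) + \<bar>1 - l\<bar> * (?X * norm ?B)"
      by (simp only: distrib_left mult.left_commute)
    also have "\<dots> \<le> \<bar>l\<bar> * Ba + \<bar>1 - l\<bar> * Bb"
      using a1 b1 by (intro add_mono mult_left_mono) simp_all
    finally have "?X * norm (nth_deriv k (seg a b l) x) \<le> \<bar>l\<bar> * Ba + \<bar>1 - l\<bar> * Bb" .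
    moreover have "norm (?X * norm (nth_deriv k (seg a b l) x)) = ?X * norm (nth_deriv k (seg a b l) x)"
      using X0 by simp
    ultimately show ?thesis by simp
  qed
  show "bounded (range (\<lambda>x. \<bar>x\<bar> ^ m * norm (nth_deriv k (seg a b l) x)))"
    unfolding bounded_iff
  proof (intro exI ballI)
    fix y assume "y \<in> range (\<lambda>x. \<bar>x\<bar> ^ m * norm (nth_deriv k (seg a b l) x))"
    then obtain x where "y = \<bar>x\<bar> ^ m * norm (nth_deriv k (seg a b l) x)" by blast
    then show "norm y \<le> \<bar>l\<bar> * Ba + \<bar>1 - l\<bar> * Bb" using bd[of x] by simp
  qed
qed

lemma qcase: "1 < p \<Longrightarrow> ereal p < q \<Longrightarrow> q = \<infinity> \<or> (\<exists>r. q = ereal r \<and> r \<ge> 1)"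
  by (cases q) auto

lemma four_nz: assumes "dec h" "h x0 \<noteq> 0" obtains \<xi> where "fourier h \<xi> \<noteq> 0"
  using four_inj[OF assms(1), of x0] assms(2) by blast

lemma Fpq_pos:
  assumes "1 < p" "ereal p < q" "schwartz h" "h \<noteq> (\<lambda>x. 0)"
  shows "Fpq p q h > 0"
proof -
  have dh: "dec h" using schw_dec[OF assms(3), of 0] by simp
  have dfh: "dec (fourier h)" by (rule four_dec[OF assms(3)])
  obtain x0 where x0: "h x0 \<noteq> 0" using assms(4) by (auto simp: fun_eq_iff)
  obtain \<xi>0 where \<xi>0: "fourier h \<xi>0 \<noteq> 0" by (rule four_nz[OF dh x0])
  have qc: "q = \<infinity> \<or> (\<exists>r. q = ereal r \<and> r \<ge> 1)" by (rule qcase[OF assms(1,2)])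
  have pc: "ereal p = \<infinity> \<or> (\<exists>r. ereal p = ereal r \<and> r \<ge> 1)" using assms(1) by auto
  have "Lnorm q h > 0" by (rule Lnorm_pos[OF dh x0 qc])
  moreover have "Lnorm q (fourier h) > 0" by (rule Lnorm_pos[OF dfh \<xi>0 qc])
  moreover have "Lnorm (ereal p) h > 0" by (rule Lnorm_pos[OF dh x0 pc])
  moreover have "Lnorm (ereal p) (fourier h) > 0" by (rule Lnorm_pos[OF dfh \<xi>0 pc])
  ultimately show ?thesis unfolding Fpq_def by simp
qed

lemma cont_Lnorm:
  assumes "dec a" "dec b" "q = \<infinity> \<or> (\<exists>r. q = ereal r \<and> r \<ge> 1)"
    "\<And>l. l \<in> {0..1} \<Longrightarrow> \<exists>x. seg a b l x \<noteq> 0"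
  shows "continuous_on {0..1} (\<lambda>l. Lnorm q (seg a b l))"
  using assms(3)
proof
  assume "q = \<infinity>" then show ?thesis using cont_Lnorm_inf[OF assms(1,2)] by simp
next
  assume "\<exists>r. q = ereal r \<and> r \<ge> 1"
  then obtain r where "q = ereal r" "r \<ge> 1" by blast
  then show ?thesis using cont_Lnorm_fin[OF assms(1,2) _ assms(4)] by simp
qed

theorem lemma4p5:
  fixes p :: real and q :: ereal
    and f g :: "nat \<Rightarrow> real \<Rightarrow> complex"
  assumes "1 < p" and "ereal p < q"
    and "\<And>n. schwartz (f n) \<and> f n \<noteq> (\<lambda>x. 0)"
    and "\<And>n. schwartz (g n) \<and> g n \<noteq> (\<lambda>x. 0)"
    and "(\<lambda>n. Fpq p q (f n)) \<longlonglongrightarrow> 0"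
    and "filterlim (\<lambda>n. Fpq p q (g n)) at_top sequentially"
    and "\<And>n l. l \<in> {0..1::real} \<Longrightarrow>
           (\<lambda>x. complex_of_real l * f n x + complex_of_real (1 - l) * g n x) \<noteq> (\<lambda>x. 0)"
  shows "Fpq p q ` {h. schwartz h \<and> h \<noteq> (\<lambda>x. 0)} = {0<..}"
proof
  show "Fpq p q ` {h. schwartz h \<and> h \<noteq> (\<lambda>x. 0)} \<subseteq> {0<..}"
    using Fpq_pos[OF assms(1,2)] by auto
next
  show "{0<..} \<subseteq> Fpq p q ` {h. schwartz h \<and> h \<noteq> (\<lambda>x. 0)}"
  proof
    fix y :: real assume "y \<in> {0<..}"
    then have y0: "y > 0" by simp
    have ev1: "eventually (\<lambda>n. Fpq p q (f n) < y) sequentially"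
      by (rule order_tendstoD(2)[OF assms(5) y0])
    have ev2: "eventually (\<lambda>n. y < Fpq p q (g n)) sequentially"
      using assms(6) unfolding filterlim_at_top_dense by blast
    obtain N where N: "\<forall>n\<ge>N. Fpq p q (f n) < y \<and> y < Fpq p q (g n)"
      using eventually_conj[OF ev1 ev2] unfolding eventually_sequentially by blast
    define a where "a = f N"
    define b where "b = g N"
    have sa: "schwartz a" and sb: "schwartz b" using assms(3,4) unfolding a_def b_def by blast+
    have da: "dec a" using schw_dec[OF sa, of 0] by simp
    have db: "dec b" using schw_dec[OF sb, of 0] by simp
    have fa: "dec (fourier a)" by (rule four_dec[OF sa])
    have fb: "dec (fourier b)" by (rule four_dec[OF sb])
    have nz: "\<exists>x. seg a b l x \<noteq> 0" if "l \<in> {0..1}" for l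
      using assms(7)[OF that, of N] unfolding seg_def a_def b_def by (auto simp: fun_eq_iff)
    have nzf: "\<exists>x. seg (fourier a) (fourier b) l x \<noteq> 0" if l: "l \<in> {0..1}" for l
    proof (rule ccontr)
      assume "\<not> (\<exists>x. seg (fourier a) (fourier b) l x \<noteq> 0)"
      then have "\<And>\<xi>. fourier (seg a b l) \<xi> = 0" using four_seg[OF da db] by simp
      then have "\<And>x. seg a b l x = 0" using four_inj[OF dec_seg[OF da db]] by blast
      then show False using nz[OF l] by blast
    qed
    have qc: "q = \<infinity> \<or> (\<exists>r. q = ereal r \<and> r \<ge> 1)" by (rule qcase[OF assms(1,2)])
    have pc: "ereal p = \<infinity> \<or> (\<exists>r. ereal p = ereal r \<and> r \<ge> 1)" using assms(1) by auto
    have Fe: "Fpq p q (seg a b l) =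
        (Lnorm q (seg a b l) * Lnorm q (seg (fourier a) (fourier b) l)) /
        (Lnorm (ereal p) (seg a b l) * Lnorm (ereal p) (seg (fourier a) (fourier b) l))" for l
      unfolding Fpq_def four_seg[OF da db] ..
    have cont: "continuous_on {0..1} (\<lambda>l. Fpq p q (seg a b l))"
      unfolding Fe
    proof (intro continuous_on_divide continuous_on_mult ballI)
      show "continuous_on {0..1} (\<lambda>l. Lnorm q (seg a b l))" by (rule cont_Lnorm[OF da db qc nz])
      show "continuous_on {0..1} (\<lambda>l. Lnorm q (seg (fourier a) (fourier b) l))" by (rule cont_Lnorm[OF fa fb qc nzf])
      show "continuous_on {0..1} (\<lambda>l. Lnorm (ereal p) (seg a b l))" by (rule cont_Lnorm[OF da db pc nz])
      show "continuous_on {0..1} (\<lambda>l. Lnorm (ereal p) (seg (fourier a) (fourier b) l))" by (rule cont_Lnorm[OF fa fb pc nzf])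
      fix l :: real assume l: "l \<in> {0..1}"
      obtain x1 where x1: "seg a b l x1 \<noteq> 0" using nz[OF l] by blast
      obtain x2 where x2: "seg (fourier a) (fourier b) l x2 \<noteq> 0" using nzf[OF l] by blast
      have "Lnorm (ereal p) (seg a b l) > 0" by (rule Lnorm_pos[OF dec_seg[OF da db] x1 pc])
      moreover have "Lnorm (ereal p) (seg (fourier a) (fourier b) l) > 0" by (rule Lnorm_pos[OF dec_seg[OF fa fb] x2 pc])
      ultimately show "Lnorm (ereal p) (seg a b l) * Lnorm (ereal p) (seg (fourier a) (fourier b) l) \<noteq> 0" by simp
    qed
    have s1: "seg a b 1 = a" by (simp add: seg_def)
    have s0: "seg a b 0 = b" by (simp add: seg_def)
    have "Fpq p q (seg a b 1) \<le> y" using N s1 unfolding a_def by auto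
    moreover have "y \<le> Fpq p q (seg a b 0)" using N s0 unfolding b_def by auto
    ultimately obtain l where l: "0 \<le> l" "l \<le> 1" "Fpq p q (seg a b l) = y"
      using IVT2'[where f="\<lambda>l. Fpq p q (seg a b l)" and a=0 and b=1 and y=y] cont by auto
    have "seg a b l \<in> {h. schwartz h \<and> h \<noteq> (\<lambda>x. 0)}"
      using schwartz_seg[OF sa sb] nz[of l] l by (auto simp: fun_eq_iff)
    then show "y \<in> Fpq p q ` {h. schwartz h \<and> h \<noteq> (\<lambda>x. 0)}"
      by (rule image_eqI[where f="Fpq p q" and x="seg a b l", OF l(3)[symmetric]])
  qed
qed

end
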